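(* Let $G=(V,E)$ be a directed graph in which every node has at least one out-neighbour, let $\alpha\in(0,1)$, let $s\in V$, let $r_{max}>0$ and let $\omega>0$. Run the FORA estimator described in the context with these parameters, producing estimates $\hat{\pi}(s,t)$, $t\in V$, and let $r_{sum}$ be the total residue left by Forward Push. Then for every node $t\in V$, every $\epsilon>0$ and every $\lambda>0$, \[ \Pr\big[|\pi(s,t)-\hat{\pi}(s,t)|\ge \epsilon\cdot\pi(s,t)\big]\le 2\exp\!\left(-\frac{\epsilon^2\cdot\omega\cdot\pi(s,t)}{r_{sum}\,(2+2\epsilon/3)}\right), \] \[ \Pr\big[|\pi(s,t)-\hat{\pi}(s,t)|\ge \lambda\big]\le 2\exp\!\left(-\frac{\lambda^2\cdot\omega}{r_{sum}\,(2\pi(s,t)+2\lambda/3)}\right). \]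
   Context: Random walk with restart from a node $u$: starting at $u$, at each step the walk terminates at the current node with probability $\alpha$, and otherwise moves to an out-neighbour of the current node chosen uniformly at random. The personalized PageRank $\pi(u,t)$ is the probability that such a walk from $u$ terminates at $t$. $N^{out}(v)$ denotes the set of out-neighbours of $v$. Forward Push (source $s$, threshold $r_{max}$): initialise residues $r(s,s)=1$, $r(s,v)=0$ for $v\neq s$, and reserves $\pi^\circ(s,v)=0$ for all $v$. While some node $v$ has $r(s,v)/|N^{out}(v)|>r_{max}$, pick such a $v$; for each $u\in N^{out}(v)$ increase $r(s,u)$ by $(1-\alpha)r(s,v)/|N^{out}(v)|$; increase $\pi^\circ(s,v)$ by $\alpha\, r(s,v)$; set $r(s,v)=0$. Output all reserves and residues. FORA estimator (parameter $\omega>0$): run Forward Push, let $r_{sum}=\sum_{v\in V} r(s,v)$, and set $\hat{\pi}(s,v)=\pi^\circ(s,v)$ for all $v$. For each node $v_i$ with $r(s,v_i)>0$, let $\omega_i=\lceil r(s,v_i)\,\omega/r_{sum}\rceil$ and $a_i=\frac{r(s,v_i)}{r_{sum}}\cdot\frac{\omega}{\omega_i}$; generate $\omega_i$ independent random walks with restart from $v_i$, and for each such walk, if it terminates at node $t$, increase $\hat{\pi}(s,t)$ by $a_i\, r_{sum}/\omega$. Return $\hat{\pi}(s,v)$ for all $v\in V$. Probabilities are over the random walks. *)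

theory Defs
  imports "HOL-Probability.Probability"
begin

definition digraph_ok :: "'a set \<Rightarrow> ('a \<Rightarrow> 'a set) \<Rightarrow> bool" where
  "digraph_ok V N \<longleftrightarrow> finite V \<and> (\<forall>v\<in>V. N v \<subseteq> V \<and> N v \<noteq> {})"

primrec walk_pmf :: "('a \<Rightarrow> 'a set) \<Rightarrow> nat \<Rightarrow> 'a \<Rightarrow> 'a pmf" where
  "walk_pmf N 0 u = return_pmf u"
| "walk_pmf N (Suc k) u = bind_pmf (pmf_of_set (N u)) (\<lambda>w. walk_pmf N k w)"

text \<open>Random walk with restart from u: the walk stops at each step with probability alpha,
  so the number of moves before termination is geometric(alpha).  This is the
  distribution of the terminal node.\<close>
definition rwr_pmf :: "('a \<Rightarrow> 'a set) \<Rightarrow> real \<Rightarrow> 'a \<Rightarrow> 'a pmf" where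
  "rwr_pmf N \<alpha> u = bind_pmf (geometric_pmf \<alpha>) (\<lambda>k. walk_pmf N k u)"

definition ppr :: "('a \<Rightarrow> 'a set) \<Rightarrow> real \<Rightarrow> 'a \<Rightarrow> 'a \<Rightarrow> real" where
  "ppr N \<alpha> u t = pmf (rwr_pmf N \<alpha> u) t"

text \<open>Forward Push. A state is (reserve, residue). One push at node v.\<close>
type_synonym 'a fp_state = "('a \<Rightarrow> real) \<times> ('a \<Rightarrow> real)"

definition push_enabled :: "'a set \<Rightarrow> ('a \<Rightarrow> 'a set) \<Rightarrow> real \<Rightarrow> 'a fp_state \<Rightarrow> 'a \<Rightarrow> bool" where
  "push_enabled V N rmax st v \<longleftrightarrow> v \<in> V \<and> snd st v / real (card (N v)) > rmax"

definition push :: "('a \<Rightarrow> 'a set) \<Rightarrow> real \<Rightarrow> 'a \<Rightarrow> 'a fp_state \<Rightarrow> 'a fp_state" where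
  "push N \<alpha> v st = (let p = fst st; r = snd st in
     (p(v := p v + \<alpha> * r v),
      \<lambda>u. (if u = v then 0 else r u)
          + (if u \<in> N v then (1 - \<alpha>) * r v / real (card (N v)) else 0)))"

inductive fp_steps :: "'a set \<Rightarrow> ('a \<Rightarrow> 'a set) \<Rightarrow> real \<Rightarrow> real \<Rightarrow> 'a fp_state \<Rightarrow> 'a fp_state \<Rightarrow> bool"
  for V N \<alpha> rmax where
  refl: "fp_steps V N \<alpha> rmax st st"
| step: "push_enabled V N rmax st v \<Longrightarrow> fp_steps V N \<alpha> rmax (push N \<alpha> v st) st'
          \<Longrightarrow> fp_steps V N \<alpha> rmax st st'"

definition fp_init :: "'a \<Rightarrow> 'a fp_state" where
  "fp_init s = ((\<lambda>_. 0), (\<lambda>v. if v = s then 1 else 0))"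

definition forward_push_output ::
  "'a set \<Rightarrow> ('a \<Rightarrow> 'a set) \<Rightarrow> real \<Rightarrow> real \<Rightarrow> 'a \<Rightarrow> 'a fp_state \<Rightarrow> bool" where
  "forward_push_output V N \<alpha> rmax s st \<longleftrightarrow>
     fp_steps V N \<alpha> rmax (fp_init s) st \<and> (\<forall>v\<in>V. \<not> push_enabled V N rmax st v)"

definition r_sum :: "'a set \<Rightarrow> 'a fp_state \<Rightarrow> real" where
  "r_sum V st = (\<Sum>v\<in>V. snd st v)"

definition fora_omega_i :: "'a set \<Rightarrow> real \<Rightarrow> 'a fp_state \<Rightarrow> 'a \<Rightarrow> nat" where
  "fora_omega_i V \<omega> st v = nat \<lceil>snd st v * \<omega> / r_sum V st\<rceil>"

definition fora_a :: "'a set \<Rightarrow> real \<Rightarrow> 'a fp_state \<Rightarrow> 'a \<Rightarrow> real" where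
  "fora_a V \<omega> st v = (snd st v / r_sum V st) * (\<omega> / real (fora_omega_i V \<omega> st v))"

text \<open>Index set of all walks: walk j from node v, for v with positive residue.\<close>
definition fora_walks :: "'a set \<Rightarrow> real \<Rightarrow> 'a fp_state \<Rightarrow> ('a \<times> nat) set" where
  "fora_walks V \<omega> st = {(v, j). v \<in> V \<and> snd st v > 0 \<and> j < fora_omega_i V \<omega> st v}"

definition fora_pmf :: "'a set \<Rightarrow> ('a \<Rightarrow> 'a set) \<Rightarrow> real \<Rightarrow> real \<Rightarrow> 'a fp_state \<Rightarrow> ('a \<Rightarrow> real) pmf" where
  "fora_pmf V N \<alpha> \<omega> st =
     map_pmf (\<lambda>f t. fst st t + (\<Sum>w\<in>fora_walks V \<omega> st.
                   if f w = t then fora_a V \<omega> st (fst w) * r_sum V st / \<omega> else 0))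
       (Pi_pmf (fora_walks V \<omega> st) undefined (\<lambda>w. rwr_pmf N \<alpha> (fst w)))"

end

theory Submission
  imports Defs
begin


lemma exp_le_neg:
  fixes x :: real assumes "x \<le> 0" shows "exp x \<le> 1 + x + x^2/2"
proof -
  let ?f = "\<lambda>x::real. exp x - 1 - x - x^2/2"
  have "?f x \<le> ?f 0"
  proof (rule DERIV_nonneg_imp_nondecreasing[OF assms])
    fix y :: real assume "x \<le> y" "y \<le> 0"
    show "\<exists>d. (?f has_real_derivative d) (at y) \<and> 0 \<le> d"
    proof -
      have d: "0 \<le> exp y - 1 - y" using exp_ge_add_one_self[of y] by linarith
      have "(?f has_real_derivative (exp y - 1 - y)) (at y)"
        by (auto intro!: derivative_eq_intros)
      with d show ?thesis by blast
    qed
  qed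
  then show ?thesis by simp
qed

lemma exp_le_pos:
  fixes x :: real assumes a: "0 \<le> x" and b: "x < 3" shows "exp x \<le> 1 + x + x^2/(2*(1-x/3))"
proof -
  have "suminf (\<lambda>n. inverse(fact (n+2)) * (x ^ (n + 2))) \<le> x\<^sup>2/(2*(1-x/3))"
  proof -
    have "(\<lambda>n. x\<^sup>2 / 2 * (x/3) ^ n) sums (x\<^sup>2 / 2 * (1 / (1 - x/3)))"
      by (intro sums_mult geometric_sums) (use a b in simp)
    then have sumsx: "(\<lambda>n. x\<^sup>2 / 2 * (x/3) ^ n) sums (x\<^sup>2/(2*(1-x/3)))"
      by simp
    have "suminf (\<lambda>n. inverse(fact (n+2)) * (x ^ (n + 2))) \<le> suminf (\<lambda>n. (x\<^sup>2/2) * ((x/3)^n))"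
    proof (intro suminf_le allI)
      show "inverse (fact (n + 2)) * x ^ (n + 2) \<le> (x\<^sup>2/2) * ((x/3)^n)" for n :: nat
      proof -
        have "(2::nat) * 3 ^ n \<le> fact (n + 2)"
        proof (induct n)
          case (Suc n)
          have "fact (Suc n + 2) = (n+3) * (fact (n+2)::nat)"
            by (simp add: algebra_simps)
          also have "\<dots> \<ge> 3 * (2 * 3^n)" using Suc by (intro mult_mono) auto
          finally show ?case by simp
        qed simp
        then have "real ((2::nat) * 3 ^ n) \<le> real_of_nat (fact (n + 2))"
          by (simp only: of_nat_le_iff)
        then have "((2::real) * 3 ^ n) \<le> fact (n + 2)"
          unfolding of_nat_fact by simp
        then have "inverse (fact (n + 2)) \<le> inverse ((2::real) * 3 ^ n)"
          by (rule le_imp_inverse_le) simp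
        then have "inverse (fact (n + 2)) * (x^n * x\<^sup>2) \<le> inverse ((2::real) * 3 ^ n) * (x^n * x\<^sup>2)"
          by (rule mult_right_mono) (use a in simp)
        also have "\<dots> = (x\<^sup>2/2) * ((x/3)^n)" by (simp add: field_simps power_divide)
        finally show ?thesis
          unfolding power_add by (simp add: ac_simps del: fact_Suc)
      qed
      show "summable (\<lambda>n. inverse (fact (n + 2)) * x ^ (n + 2))"
        by (rule summable_exp [THEN summable_ignore_initial_segment])
      show "summable (\<lambda>n. x\<^sup>2 / 2 * (x/3) ^ n)"
        by (rule sums_summable [OF sumsx])
    qed
    also have "\<dots> = x\<^sup>2/(2*(1-x/3))"
      by (rule sums_unique [THEN sym]) (rule sumsx)
    finally show ?thesis .
  qed
  then show ?thesis
    unfolding exp_first_two_terms by auto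
qed

lemma exp_le_quad:
  fixes x u :: real assumes "x \<le> u" "0 \<le> u" "u < 3"
  shows "exp x \<le> 1 + x + x^2/(2*(1-u/3))"
proof (cases "x \<le> 0")
  case True
  have "x^2/2 \<le> x^2/(2*(1-u/3))"
    using assms by (intro divide_left_mono) (auto simp: field_simps)
  then show ?thesis using exp_le_neg[OF True] by linarith
next
  case False
  have p1: "0 < 2*(1-u/3)" "0 < 2*(1-x/3)" using assms False by auto
  have "x^2/(2*(1-x/3)) \<le> x^2/(2*(1-u/3))"
    using assms False mult_pos_pos[OF p1] by (intro divide_left_mono) auto
  then show ?thesis using exp_le_pos[of x] False assms by linarith
qed

lemma pmf_integrable_bounded:
  fixes f :: "'b \<Rightarrow> real"
  assumes "\<And>x. \<bar>f x\<bar> \<le> B"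
  shows "integrable (measure_pmf p) f"
  by (rule measure_pmf.integrable_const_bound[of _ B]) (use assms in auto)

lemma mgf_bound:
  fixes p :: "'b pmf" and Y :: "'b \<Rightarrow> real"
  assumes bnd: "\<And>x. \<bar>Y x\<bar> \<le> M"
    and mean: "measure_pmf.expectation p Y = 0"
    and ub: "\<And>x. Y x \<le> b" and th: "0 \<le> \<theta>" "\<theta> * b < 3" and b: "0 \<le> b"
  shows "measure_pmf.expectation p (\<lambda>x. exp (\<theta> * Y x))
     \<le> exp (\<theta>^2 * measure_pmf.expectation p (\<lambda>x. (Y x)^2) / (2*(1 - \<theta>*b/3)))"
proof -
  define c where "c = 1 / (2*(1 - \<theta>*b/3))"
  have pt: "exp (\<theta> * Y x) \<le> 1 + \<theta> * Y x + c * \<theta>^2 * (Y x)^2" for x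
  proof -
    have "\<theta> * Y x \<le> \<theta> * b" using ub th by (intro mult_left_mono) auto
    from exp_le_quad[OF this mult_nonneg_nonneg[OF th(1) b] th(2)]
    show ?thesis by (simp add: c_def power_mult_distrib)
  qed
  have i1: "integrable (measure_pmf p) Y" using bnd by (rule pmf_integrable_bounded)
  have i2: "integrable (measure_pmf p) (\<lambda>x. (Y x)^2)"
  proof (rule pmf_integrable_bounded[of _ "M^2"])
    fix x show "\<bar>(Y x)^2\<bar> \<le> M^2" using power_mono[OF bnd[of x] abs_ge_zero, of 2] by simp
  qed
  have "measure_pmf.expectation p (\<lambda>x. exp (\<theta> * Y x))
      \<le> measure_pmf.expectation p (\<lambda>x. 1 + \<theta> * Y x + c * \<theta>^2 * (Y x)^2)"
  proof (rule integral_mono)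
    show "integrable (measure_pmf p) (\<lambda>x. exp (\<theta> * Y x))"
    proof (rule pmf_integrable_bounded[of _ "exp (\<theta> * M)"])
      fix x have "\<theta> * Y x \<le> \<theta> * M" using bnd[of x] th by (intro mult_left_mono) auto
      then show "\<bar>exp (\<theta> * Y x)\<bar> \<le> exp (\<theta> * M)" by simp
    qed
    show "integrable (measure_pmf p) (\<lambda>x. 1 + \<theta> * Y x + c * \<theta>^2 * (Y x)^2)"
      using i1 i2 by auto
  qed (rule pt)
  also have "\<dots> = 1 + c * \<theta>^2 * measure_pmf.expectation p (\<lambda>x. (Y x)^2)"
    using i1 i2 mean by simp
  also have "\<dots> \<le> exp (c * \<theta>^2 * measure_pmf.expectation p (\<lambda>x. (Y x)^2))"
    by (rule exp_ge_add_one_self)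
  finally show ?thesis by (simp add: c_def)
qed

lemma aux_alg: "(D::real) > 0 \<Longrightarrow> S > 0 \<Longrightarrow> (l/D)^2 * S * (D/(2*S)) = l^2/(2*D)"
  by (simp add: power2_eq_square field_simps)

lemma bernstein_Pi:
  fixes Y :: "'i \<Rightarrow> 'b \<Rightarrow> real" and p :: "'i \<Rightarrow> 'b pmf"
  assumes fin: "finite I"
    and bnd: "\<And>i x. i \<in> I \<Longrightarrow> \<bar>Y i x\<bar> \<le> M"
    and mean: "\<And>i. i \<in> I \<Longrightarrow> measure_pmf.expectation (p i) (Y i) = 0"
    and ub: "\<And>i x. i \<in> I \<Longrightarrow> Y i x \<le> b"
    and b: "b > 0" and lam: "lam > 0"
    and S: "(\<Sum>i\<in>I. measure_pmf.expectation (p i) (\<lambda>x. (Y i x)^2)) \<le> S"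
  shows "measure_pmf.prob (Pi_pmf I d p) {f. lam \<le> (\<Sum>i\<in>I. Y i (f i))}
           \<le> exp (- (lam^2) / (2 * (S + b * lam / 3)))"
proof -
  define V where "V = (\<Sum>i\<in>I. measure_pmf.expectation (p i) (\<lambda>x. (Y i x)^2))"
  have V0: "0 \<le> V" unfolding V_def
    by (intro sum_nonneg Bochner_Integration.integral_nonneg) auto
  have S0: "0 \<le> S" using V0 S V_def by linarith
  have M0: "0 \<le> M" if "I \<noteq> {}" using bnd that by (meson abs_ge_zero all_not_in_conv order_trans)
  define \<theta> where "\<theta> = (if S > 0 then lam / (S + b * lam / 3) else 3 / (2 * b))"
  have th0: "0 \<le> \<theta>" using S0 b lam by (auto simp: \<theta>_def)
  have th3: "\<theta> * b < 3"
  proof (cases "S > 0")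
    case True
    then have "\<theta> * b = 3 * (b * lam) / (3 * S + b * lam)" using b lam
      by (simp add: \<theta>_def field_simps)
    also have "\<dots> < 3"
    proof -
      have pos: "0 < 3 * S + b * lam" using True mult_pos_pos[OF b lam] by simp
      show ?thesis unfolding pos_divide_less_eq[OF pos] using True by simp
    qed
    finally show ?thesis .
  qed (use b in \<open>simp add: \<theta>_def\<close>)
  define c where "c = 1 / (2*(1 - \<theta>*b/3))"
  have c0: "0 < c" using th3 by (simp add: c_def)
  define Sm where "Sm = (\<lambda>f. (\<Sum>i\<in>I. Y i (f i)))"
  have Smb: "\<bar>Sm f\<bar> \<le> real (card I) * M" for f
  proof -
    have "\<bar>Sm f\<bar> \<le> (\<Sum>i\<in>I. \<bar>Y i (f i)\<bar>)" unfolding Sm_def by (rule sum_abs)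
    also have "\<dots> \<le> (\<Sum>i\<in>I. M)" by (intro sum_mono bnd)
    finally show ?thesis by simp
  qed
  have "measure_pmf.prob (Pi_pmf I d p) {f. lam \<le> Sm f}
        = measure_pmf.expectation (Pi_pmf I d p) (indicator {f. lam \<le> Sm f})"
    by simp
  also have "\<dots> \<le> measure_pmf.expectation (Pi_pmf I d p) (\<lambda>f. exp (\<theta> * (Sm f - lam)))"
  proof (rule integral_mono)
    show "integrable (measure_pmf (Pi_pmf I d p)) (indicator {f. lam \<le> Sm f} :: _ \<Rightarrow> real)"
      by (rule pmf_integrable_bounded[of _ 1]) (auto simp: indicator_def)
    show "integrable (measure_pmf (Pi_pmf I d p)) (\<lambda>f. exp (\<theta> * (Sm f - lam)))"
    proof (rule pmf_integrable_bounded[of _ "exp (\<theta> * (real (card I) * M + lam))"])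
      fix f
      have "\<theta> * (Sm f - lam) \<le> \<theta> * (real (card I) * M + lam)"
        using Smb[of f] th0 lam by (intro mult_left_mono) auto
      then show "\<bar>exp (\<theta> * (Sm f - lam))\<bar> \<le> exp (\<theta> * (real (card I) * M + lam))" by simp
    qed
    fix f
    show "indicator {f. lam \<le> Sm f} f \<le> exp (\<theta> * (Sm f - lam))"
      using th0 by (auto simp: indicator_def)
  qed
  also have "\<dots> = exp (- \<theta> * lam) * measure_pmf.expectation (Pi_pmf I d p) (\<lambda>f. \<Prod>i\<in>I. exp (\<theta> * Y i (f i)))"
  proof -
    have "(\<lambda>f. exp (\<theta> * (Sm f - lam))) = (\<lambda>f. exp (- \<theta> * lam) * (\<Prod>i\<in>I. exp (\<theta> * Y i (f i))))"
      by (rule ext) (simp add: Sm_def exp_sum[OF fin, symmetric] sum_distrib_left algebra_simps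
          flip: exp_add)
    then show ?thesis by simp
  qed
  also have "measure_pmf.expectation (Pi_pmf I d p) (\<lambda>f. \<Prod>i\<in>I. exp (\<theta> * Y i (f i)))
      = (\<Prod>i\<in>I. measure_pmf.expectation (p i) (\<lambda>x. exp (\<theta> * Y i x)))"
  proof (rule expectation_prod_Pi_pmf[OF fin])
    fix i assume i: "i \<in> I"
    show "integrable (measure_pmf (p i)) (\<lambda>x. exp (\<theta> * Y i x))"
    proof (rule pmf_integrable_bounded[of _ "exp (\<theta> * M)"])
      fix x have "\<theta> * Y i x \<le> \<theta> * M" using bnd[OF i, of x] th0 by (intro mult_left_mono) auto
      then show "\<bar>exp (\<theta> * Y i x)\<bar> \<le> exp (\<theta> * M)" by simp
    qed
  qed auto
  also have "\<dots> \<le> (\<Prod>i\<in>I. exp (\<theta>^2 * measure_pmf.expectation (p i) (\<lambda>x. (Y i x)^2) * c))"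
  proof (rule prod_mono)
    fix i assume i: "i \<in> I"
    have "measure_pmf.expectation (p i) (\<lambda>x. exp (\<theta> * Y i x))
      \<le> exp (\<theta>^2 * measure_pmf.expectation (p i) (\<lambda>x. (Y i x)^2) / (2*(1 - \<theta>*b/3)))"
      by (rule mgf_bound[OF bnd[OF i] mean[OF i] ub[OF i] th0 th3]) (use b in simp)
    then show "0 \<le> measure_pmf.expectation (p i) (\<lambda>x. exp (\<theta> * Y i x)) \<and>
       measure_pmf.expectation (p i) (\<lambda>x. exp (\<theta> * Y i x))
         \<le> exp (\<theta>^2 * measure_pmf.expectation (p i) (\<lambda>x. (Y i x)^2) * c)"
      by (auto simp: c_def intro!: Bochner_Integration.integral_nonneg)
  qed
  also have "\<dots> = exp (\<theta>^2 * V * c)"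
    by (simp add: V_def exp_sum[OF fin, symmetric] sum_distrib_left sum_distrib_right)
  also have "exp (- \<theta> * lam) * exp (\<theta>^2 * V * c) \<le> exp (- \<theta> * lam + \<theta>^2 * S * c)"
  proof -
    have "\<theta>^2 * V * c \<le> \<theta>^2 * S * c"
      using S c0 by (intro mult_right_mono mult_left_mono) (auto simp: V_def)
    then show ?thesis by (simp add: exp_add[symmetric])
  qed
  also have "- \<theta> * lam + \<theta>^2 * S * c = - (lam^2) / (2 * (S + b * lam / 3))"
  proof (cases "S > 0")
    case True
    have pos: "0 < S + b * lam / 3" using True mult_pos_pos[OF b lam] by simp
    have e: "1 - \<theta>*b/3 = S / (S + b * lam / 3)"
      using pos by (simp add: \<theta>_def True field_simps)
    have "c = 1 / (2 * (S / (S + b * lam / 3)))" unfolding c_def e ..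
    then have "c = (S + b * lam / 3) / (2 * S)" using True pos by (simp add: field_simps)
    then have "\<theta>^2 * S * c = (lam / (S + b * lam / 3))^2 * S * ((S + b * lam / 3) / (2 * S))"
      using True by (simp add: \<theta>_def)
    also have "\<dots> = lam^2 / (2 * (S + b * lam / 3))"
      using True pos aux_alg by blast
    finally have "\<theta>^2 * S * c = lam^2 / (2 * (S + b * lam / 3))" .
    moreover have "\<theta> * lam = lam^2 / (S + b * lam / 3)"
      using True by (simp add: \<theta>_def power2_eq_square)
    ultimately show ?thesis using pos by (simp add: field_simps)
  next
    case False
    then have "S = 0" using S0 by simp
    then show ?thesis using b lam by (simp add: \<theta>_def field_simps power2_eq_square)
  qed
  finally show ?thesis by (simp add: Sm_def mult_left_mono)
qed



lemma rwr_unfold: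
  assumes "finite (N v)" "N v \<noteq> {}" "0 < \<alpha>" "\<alpha> < 1"
  shows "rwr_pmf N \<alpha> v = bind_pmf (bernoulli_pmf \<alpha>)
     (\<lambda>b. if b then return_pmf v else bind_pmf (pmf_of_set (N v)) (\<lambda>u. rwr_pmf N \<alpha> u))"
proof -
  have "rwr_pmf N \<alpha> v = bind_pmf (bind_pmf (bernoulli_pmf \<alpha>)
         (\<lambda>b. if b then return_pmf 0 else map_pmf Suc (geometric_pmf \<alpha>))) (\<lambda>k. walk_pmf N k v)"
    unfolding rwr_pmf_def using assms by (subst geometric_bind_pmf_unfold) auto
  also have "\<dots> = bind_pmf (bernoulli_pmf \<alpha>)
     (\<lambda>b. if b then return_pmf v else bind_pmf (pmf_of_set (N v)) (\<lambda>u. rwr_pmf N \<alpha> u))"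
    unfolding bind_assoc_pmf
  proof (rule bind_pmf_cong[OF HOL.refl])
    fix b :: bool
    show "bind_pmf (if b then return_pmf 0 else map_pmf Suc (geometric_pmf \<alpha>)) (\<lambda>k. walk_pmf N k v) =
          (if b then return_pmf v else bind_pmf (pmf_of_set (N v)) (rwr_pmf N \<alpha>))"
    proof (cases b)
      case False
      have "bind_pmf (geometric_pmf \<alpha>) (\<lambda>k. bind_pmf (pmf_of_set (N v)) (\<lambda>u. walk_pmf N k u))
          = bind_pmf (pmf_of_set (N v)) (\<lambda>u. bind_pmf (geometric_pmf \<alpha>) (\<lambda>k. walk_pmf N k u))"
        by (rule bind_commute_pmf)
      moreover have "rwr_pmf N \<alpha> = (\<lambda>u. bind_pmf (geometric_pmf \<alpha>) (\<lambda>k. walk_pmf N k u))"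
        by (rule ext) (simp add: rwr_pmf_def)
      ultimately show ?thesis using False by (simp add: bind_map_pmf)
    qed (simp add: bind_return_pmf)
  qed
  finally show ?thesis .
qed

lemma ppr_rec:
  assumes "finite (N v)" "N v \<noteq> {}" "0 < \<alpha>" "\<alpha> < 1"
  shows "ppr N \<alpha> v t = \<alpha> * (if v = t then 1 else 0)
           + (1 - \<alpha>) * (\<Sum>u\<in>N v. ppr N \<alpha> u t) / real (card (N v))"
  unfolding ppr_def rwr_unfold[of N v \<alpha>, OF assms] pmf_bind using assms
  by (simp add: pmf_bind_pmf_of_set pmf_return indicator_def)

definition fp_inv :: "'a set \<Rightarrow> ('a \<Rightarrow> 'a set) \<Rightarrow> real \<Rightarrow> 'a \<Rightarrow> 'a fp_state \<Rightarrow> bool" where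
  "fp_inv V N \<alpha> s st \<longleftrightarrow> (\<forall>v. v \<notin> V \<longrightarrow> snd st v = 0) \<and> (\<forall>v. 0 \<le> snd st v) \<and> (\<forall>v. 0 \<le> fst st v)
     \<and> (\<forall>t. fst st t + (\<Sum>v\<in>V. snd st v * ppr N \<alpha> v t) = ppr N \<alpha> s t)"

lemma fp_inv_init:
  assumes "finite V" "s \<in> V" shows "fp_inv V N \<alpha> s (fp_init s)"
proof -
  have "(\<Sum>v\<in>V. (if v = s then 1 else 0) * ppr N \<alpha> v t) = ppr N \<alpha> s t" for t
  proof -
    have "(\<Sum>v\<in>V. (if v = s then 1 else 0) * ppr N \<alpha> v t) = (\<Sum>v\<in>V. if v = s then ppr N \<alpha> v t else 0)"
      by (rule sum.cong) auto
    also have "\<dots> = ppr N \<alpha> s t" using assms by (simp add: sum.delta)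
    finally show ?thesis .
  qed
  then show ?thesis using assms by (simp add: fp_inv_def fp_init_def)
qed

lemma fp_inv_push:
  assumes G: "digraph_ok V N" and a: "0 < \<alpha>" "\<alpha> < 1"
    and I: "fp_inv V N \<alpha> s st" and v: "v \<in> V"
  shows "fp_inv V N \<alpha> s (push N \<alpha> v st)"
proof -
  obtain p r where st: "st = (p, r)" by (cases st)
  have fin: "finite V" and Nv: "N v \<subseteq> V" "N v \<noteq> {}" using G v by (auto simp: digraph_ok_def)
  have finN: "finite (N v)" using fin Nv finite_subset by blast
  have cpos: "0 < real (card (N v))" using finN Nv by (simp add: card_gt_0_iff)
  define c where "c = (1 - \<alpha>) * r v / real (card (N v))"
  define r' where "r' = (\<lambda>u. (if u = v then 0 else r u) + (if u \<in> N v then c else 0))"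
  define p' where "p' = p(v := p v + \<alpha> * r v)"
  have P: "push N \<alpha> v st = (p', r')" unfolding r'_def p'_def c_def by (simp add: push_def st Let_def)
  have out: "\<forall>u. u \<notin> V \<longrightarrow> r u = 0" and rnn: "\<forall>u. 0 \<le> r u" and pnn: "\<forall>u. 0 \<le> p u"
    and eq: "\<forall>t. p t + (\<Sum>u\<in>V. r u * ppr N \<alpha> u t) = ppr N \<alpha> s t"
    using I by (auto simp: fp_inv_def st)
  have c0: "0 \<le> c" using rnn a cpos by (simp add: c_def)
  have "\<forall>u. u \<notin> V \<longrightarrow> r' u = 0" using out v Nv by (auto simp: r'_def)
  moreover have "\<forall>u. 0 \<le> r' u" using rnn c0 by (auto simp: r'_def)
  moreover have "\<forall>u. 0 \<le> p' u" using pnn rnn a by (auto simp: p'_def)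
  moreover have "p' t + (\<Sum>u\<in>V. r' u * ppr N \<alpha> u t) = ppr N \<alpha> s t" for t
  proof -
    have s1: "(\<Sum>u\<in>V. r' u * ppr N \<alpha> u t) = (\<Sum>u\<in>V. (if u = v then 0 else r u) * ppr N \<alpha> u t)
             + (\<Sum>u\<in>V. (if u \<in> N v then c else 0) * ppr N \<alpha> u t)"
      by (simp add: r'_def distrib_right sum.distrib)
    have s2: "(\<Sum>u\<in>V. (if u = v then 0 else r u) * ppr N \<alpha> u t) = (\<Sum>u\<in>V. r u * ppr N \<alpha> u t) - r v * ppr N \<alpha> v t"
    proof -
      have "(\<Sum>u\<in>V. r u * ppr N \<alpha> u t) = (\<Sum>u\<in>V. (if u = v then 0 else r u) * ppr N \<alpha> u t) + (\<Sum>u\<in>V. (if u = v then r u else 0) * ppr N \<alpha> u t)"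
        by (simp add: sum.distrib[symmetric] distrib_right[symmetric] cong: if_cong) (rule sum.cong, auto)
      also have "(\<Sum>u\<in>V. (if u = v then r u else 0) * ppr N \<alpha> u t) = r v * ppr N \<alpha> v t"
      proof -
        have "(\<Sum>u\<in>V. (if u = v then r u else 0) * ppr N \<alpha> u t) = (\<Sum>u\<in>V. if u = v then r u * ppr N \<alpha> u t else 0)"
          by (rule sum.cong) auto
        also have "\<dots> = r v * ppr N \<alpha> v t" using fin v by (simp add: sum.delta)
        finally show ?thesis .
      qed
      finally show ?thesis by simp
    qed
    have s3: "(\<Sum>u\<in>V. (if u \<in> N v then c else 0) * ppr N \<alpha> u t) = c * (\<Sum>u\<in>N v. ppr N \<alpha> u t)"
    proof -
      have "(\<Sum>u\<in>V. (if u \<in> N v then c else 0) * ppr N \<alpha> u t) = (\<Sum>u\<in>V. if u \<in> N v then c * ppr N \<alpha> u t else 0)"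
        by (rule sum.cong) auto
      also have "\<dots> = (\<Sum>u\<in>V \<inter> N v. c * ppr N \<alpha> u t)"
        using fin by (simp add: sum.inter_restrict)
      also have "V \<inter> N v = N v" using Nv by blast
      finally show ?thesis by (simp add: sum_distrib_left)
    qed
    have rec: "ppr N \<alpha> v t = \<alpha> * (if v = t then 1 else 0)
           + (1 - \<alpha>) * (\<Sum>u\<in>N v. ppr N \<alpha> u t) / real (card (N v))"
      by (rule ppr_rec[of N v \<alpha>, OF finN Nv(2) a])
    have "c * (\<Sum>u\<in>N v. ppr N \<alpha> u t) = r v * (ppr N \<alpha> v t - \<alpha> * (if v = t then 1 else 0))"
      unfolding rec c_def by (simp add: field_simps)
    then show ?thesis using eq[rule_format, of t] s1 s2 s3
      by (auto simp: p'_def algebra_simps split: if_splits)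
  qed
  ultimately show ?thesis by (simp add: fp_inv_def P)
qed

lemma fp_inv_steps:
  assumes "fp_steps V N \<alpha> rmax st st'" "digraph_ok V N" "0 < \<alpha>" "\<alpha> < 1" "fp_inv V N \<alpha> s st"
  shows "fp_inv V N \<alpha> s st'"
  using assms
proof (induction rule: fp_steps.induct)
  case (step st v st')
  then show ?case using fp_inv_push[of V N \<alpha> s st v] by (auto simp: push_enabled_def)
qed simp



lemma integral_if_eq:
  fixes A B :: real
  shows "measure_pmf.expectation p (\<lambda>x. if x = t then A else B) = A * pmf p t + B * (1 - pmf p t)"
proof -
  have "(\<lambda>x. if x = t then A else B) = (\<lambda>x. B + (A - B) * indicator {t} x)"
    by (auto simp: indicator_def)
  then have "measure_pmf.expectation p (\<lambda>x. if x = t then A else B)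
        = measure_pmf.expectation p (\<lambda>x. B + (A - B) * indicator {t} x)" by simp
  also have "\<dots> = B + (A - B) * pmf p t"
  proof -
    have i: "integrable (measure_pmf p) (indicat_real {t})"
      by (rule pmf_integrable_bounded[of _ 1]) (auto simp: indicator_def)
    show ?thesis using i by (subst Bochner_Integration.integral_add) (auto simp: measure_pmf_single)
  qed
  finally show ?thesis by (simp add: algebra_simps)
qed

lemma two_point_facts:
  fixes k b qq :: real
  assumes "0 \<le> k" "k \<le> b" "0 \<le> qq" "qq \<le> 1"
  shows "\<bar>k*qq - k\<bar> \<le> b" "\<bar>k*qq\<bar> \<le> b" "(k*qq-k)*qq + k*qq*(1-qq) = 0"
    "(k*qq-k)^2*qq + (k*qq)^2*(1-qq) \<le> b*(k*qq)"
proof -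
  have "k*qq \<le> k" using assms mult_left_le by blast
  moreover have "0 \<le> k*qq" using assms by simp
  ultimately show "\<bar>k*qq - k\<bar> \<le> b" "\<bar>k*qq\<bar> \<le> b" unfolding abs_le_iff using assms by linarith+
  show "(k*qq-k)*qq + k*qq*(1-qq) = 0" by (simp add: algebra_simps)
  have "(k*qq-k)^2*qq + (k*qq)^2*(1-qq) = k * (k*qq) * (1 - qq)"
    by (simp add: algebra_simps power2_eq_square)
  also have "\<dots> \<le> k * (k*qq) * 1" using assms by (intro mult_left_mono) auto
  also have "\<dots> \<le> b * (k*qq)" using mult_right_mono[OF assms(2), of "k*qq"] assms by simp
  finally show "(k*qq-k)^2*qq + (k*qq)^2*(1-qq) \<le> b*(k*qq)" .
qed

lemma final_arith:
  fixes lam \<omega> Rs pp :: real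
  assumes "\<omega> > 0" "Rs > 0" "pp \<ge> 0" "lam > 0"
  shows "- (lam^2) / (2 * (Rs / \<omega> * pp + Rs / \<omega> * lam / 3)) = - (lam^2 * \<omega>) / (Rs * (2 * pp + 2 * lam / 3))"
  using assms by (simp add: field_simps)

lemma fora_tail:
  fixes V :: "'a set"
  assumes G: "digraph_ok V N" and a: "0 < \<alpha>" "\<alpha> < 1" and om: "\<omega> > 0"
    and I: "fp_inv V N \<alpha> s st" and R: "r_sum V st > 0" and lam: "lam > 0"
  shows "measure_pmf.prob (fora_pmf V N \<alpha> \<omega> st) {est. \<bar>ppr N \<alpha> s t - est t\<bar> \<ge> lam}
         \<le> 2 * exp (- (lam^2 * \<omega>) / (r_sum V st * (2 * ppr N \<alpha> s t + 2 * lam / 3)))"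
proof -
  define r where "r = snd st"
  define p where "p = fst st"
  define Rs where "Rs = r_sum V st"
  define W where "W = fora_walks V \<omega> st"
  define b where "b = Rs / \<omega>"
  define K where "K = (\<lambda>w::'a \<times> nat. fora_a V \<omega> st (fst w) * Rs / \<omega>)"
  define oi where "oi = fora_omega_i V \<omega> st"
  define q where "q = (\<lambda>v. ppr N \<alpha> v t)"
  define A where "A = {v\<in>V. 0 < r v}"
  define pp where "pp = ppr N \<alpha> s t"
  have fin: "finite V" using G by (simp add: digraph_ok_def)
  have rnn: "\<And>v. 0 \<le> r v" and pnn: "\<And>v. 0 \<le> p v"
    and eq: "p t + (\<Sum>v\<in>V. r v * q v) = pp"
    using I by (auto simp: fp_inv_def r_def p_def q_def pp_def)
  have Rs0: "Rs > 0" using R by (simp add: Rs_def)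
  have b0: "b > 0" using Rs0 om by (simp add: b_def)
  have Wsig: "W = Sigma A (\<lambda>v. {..<oi v})"
    by (auto simp: W_def fora_walks_def A_def r_def oi_def)
  have finW: "finite W" unfolding Wsig A_def using fin by auto
  have oi_ge: "real (oi v) \<ge> r v * \<omega> / Rs" for v
    unfolding oi_def fora_omega_i_def r_def Rs_def by (rule real_nat_ceiling_ge)
  have oi_pos: "real (oi v) > 0" if "v \<in> A" for v
  proof -
    have "r v * \<omega> / Rs > 0" using that Rs0 om by (simp add: A_def)
    then show ?thesis using oi_ge[of v] by linarith
  qed
  have K_eq: "K w = r (fst w) / real (oi (fst w))" if "fst w \<in> A" for w
    using oi_pos[OF that] Rs0 om
    by (simp add: K_def fora_a_def r_def Rs_def oi_def)
  have K0: "0 \<le> K w" if "w \<in> W" for w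
    using that K_eq[of w] rnn[of "fst w"] oi_pos[of "fst w"] by (auto simp: Wsig)
  have Kb: "K w \<le> b" if "w \<in> W" for w
  proof -
    have fa: "fst w \<in> A" using that by (auto simp: Wsig)
    have "r (fst w) * \<omega> \<le> Rs * real (oi (fst w))"
      using oi_ge[of "fst w"] Rs0 by (simp add: field_simps)
    then have "r (fst w) / real (oi (fst w)) \<le> Rs / \<omega>" using oi_pos[OF fa] Rs0 om
      by (simp add: field_simps)
    then show ?thesis using K_eq[OF fa] by (simp add: b_def)
  qed
  have q01: "0 \<le> q v" "q v \<le> 1" for v by (auto simp: q_def ppr_def pmf_le_1)
  have sumK: "(\<Sum>w\<in>W. K w * q (fst w)) = pp - p t"
  proof -
    have "(\<Sum>w\<in>W. K w * q (fst w)) = (\<Sum>v\<in>A. \<Sum>j<oi v. K (v, j) * q v)"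
      unfolding Wsig by (subst sum.Sigma) (auto simp: A_def fin split_beta intro!: sum.cong)
    also have "\<dots> = (\<Sum>v\<in>A. r v * q v)"
    proof (rule sum.cong[OF HOL.refl])
      fix v assume v: "v \<in> A"
      have "(\<Sum>j<oi v. K (v, j) * q v) = (\<Sum>j<oi v. r v / real (oi v) * q v)"
        using K_eq[of "(v, _)"] v by simp
      also have "\<dots> = r v * q v" using oi_pos[OF v] by simp
      finally show "(\<Sum>j<oi v. K (v, j) * q v) = r v * q v" .
    qed
    also have "\<dots> = (\<Sum>v\<in>V. r v * q v)"
      unfolding A_def
      by (rule sum.mono_neutral_left) (use fin rnn in \<open>auto simp: order.order_iff_strict\<close>)
    finally show ?thesis using eq by simp
  qed
  define Y where "Y = (\<lambda>w x. K w * q (fst w) - (if x = t then K w else 0))"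
  have est: "ppr N \<alpha> s t - est t = (\<Sum>w\<in>W. Y w (f w))"
    if "est = (\<lambda>t'. p t' + (\<Sum>w\<in>W. if f w = t' then K w else 0))" for est f
    using that sumK by (simp add: Y_def sum_subtractf pp_def)
  define g where "g = (\<lambda>f t'. p t' + (\<Sum>w\<in>W. if f w = t' then K w else 0))"
  define P where "P = Pi_pmf W undefined (\<lambda>w. rwr_pmf N \<alpha> (fst w))"
  have fp: "fora_pmf V N \<alpha> \<omega> st = map_pmf g P"
    unfolding fora_pmf_def g_def P_def W_def K_def p_def Rs_def by simp
  define E1 where "E1 = {f. lam \<le> (\<Sum>w\<in>W. Y w (f w))}"
  define E2 where "E2 = {f. lam \<le> (\<Sum>w\<in>W. (\<lambda>w x. - Y w x) w (f w))}"
  have sub: "g -` {est. \<bar>ppr N \<alpha> s t - est t\<bar> \<ge> lam} \<subseteq> E1 \<union> E2"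
  proof
    fix f assume "f \<in> g -` {est. \<bar>ppr N \<alpha> s t - est t\<bar> \<ge> lam}"
    then have h: "lam \<le> \<bar>ppr N \<alpha> s t - g f t\<bar>" by simp
    have "ppr N \<alpha> s t - g f t = (\<Sum>w\<in>W. Y w (f w))" by (rule est) (simp add: g_def)
    then show "f \<in> E1 \<union> E2" using h by (auto simp: E1_def E2_def sum_negf abs_if split: if_splits)
  qed
  have pq: "pmf (rwr_pmf N \<alpha> (fst w)) t = q (fst w)" for w by (simp add: q_def ppr_def)
  have Yif: "Y w = (\<lambda>x. if x = t then K w * q (fst w) - K w else K w * q (fst w))" for w
    by (auto simp: Y_def)
  have Y2if: "(\<lambda>x. (Y w x)^2) = (\<lambda>x. if x = t then (K w * q (fst w) - K w)^2 else (K w * q (fst w))^2)" for w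
    by (auto simp: Y_def)
  have nY2if: "(\<lambda>x. (- Y w x)^2) = (\<lambda>x. if x = t then (K w * q (fst w) - K w)^2 else (K w * q (fst w))^2)" for w
    by (simp only: power2_minus Y2if)
  have tp: "\<bar>K w * q (fst w) - K w\<bar> \<le> b" "\<bar>K w * q (fst w)\<bar> \<le> b"
     "(K w * q (fst w) - K w) * q (fst w) + K w * q (fst w) * (1 - q (fst w)) = 0"
     "(K w * q (fst w) - K w)^2 * q (fst w) + (K w * q (fst w))^2 * (1 - q (fst w)) \<le> b * (K w * q (fst w))"
    if "w \<in> W" for w
    using two_point_facts[OF K0[OF that] Kb[OF that] q01] by auto
  have bndY: "\<bar>Y w x\<bar> \<le> b" if "w \<in> W" for w x
    using tp[OF that] by (auto simp: Yif)
  have meanY: "measure_pmf.expectation (rwr_pmf N \<alpha> (fst w)) (Y w) = 0" if "w \<in> W" for w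
    using tp[OF that] by (simp add: Yif integral_if_eq pq)
  have sqY: "measure_pmf.expectation (rwr_pmf N \<alpha> (fst w)) (\<lambda>x. (Y w x)^2) \<le> b * (K w * q (fst w))"
    if "w \<in> W" for w
    using tp[OF that] unfolding Y2if[of w] integral_if_eq pq by simp
  have sqnY: "measure_pmf.expectation (rwr_pmf N \<alpha> (fst w)) (\<lambda>x. (- Y w x)^2) \<le> b * (K w * q (fst w))"
    if "w \<in> W" for w
    using tp[OF that] unfolding nY2if[of w] integral_if_eq pq by simp
  have pp0: "0 \<le> pp" by (simp add: pp_def ppr_def)
  have sumb: "(\<Sum>w\<in>W. b * (K w * q (fst w))) \<le> b * pp"
    using sumK pnn[of t] b0 by (simp add: sum_distrib_left[symmetric])
  have S1: "(\<Sum>w\<in>W. measure_pmf.expectation (rwr_pmf N \<alpha> (fst w)) (\<lambda>x. (Y w x)^2)) \<le> b * pp"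
    using sum_mono[of W "\<lambda>w. measure_pmf.expectation (rwr_pmf N \<alpha> (fst w)) (\<lambda>x. (Y w x)^2)" "\<lambda>w. b * (K w * q (fst w))", OF sqY] sumb by linarith
  have S2: "(\<Sum>w\<in>W. measure_pmf.expectation (rwr_pmf N \<alpha> (fst w)) (\<lambda>x. (- Y w x)^2)) \<le> b * pp"
    using sum_mono[of W "\<lambda>w. measure_pmf.expectation (rwr_pmf N \<alpha> (fst w)) (\<lambda>x. (- Y w x)^2)" "\<lambda>w. b * (K w * q (fst w))", OF sqnY] sumb by linarith
  have B1: "measure_pmf.prob P E1 \<le> exp (- (lam^2) / (2 * (b * pp + b * lam / 3)))"
    unfolding P_def E1_def
    by (rule bernstein_Pi[OF finW bndY meanY _ b0 lam S1]) (use bndY in \<open>auto simp: abs_le_iff\<close>)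
  have B2: "measure_pmf.prob P E2 \<le> exp (- (lam^2) / (2 * (b * pp + b * lam / 3)))"
    unfolding P_def E2_def
  proof (rule bernstein_Pi[OF finW _ _ _ b0 lam S2])
    show "\<bar>- Y w x\<bar> \<le> b" if "w \<in> W" for w x using bndY[OF that] by simp
    show "- Y w x \<le> b" if "w \<in> W" for w x using bndY[OF that, of x] by (simp add: abs_le_iff)
    show "measure_pmf.expectation (rwr_pmf N \<alpha> (fst w)) (\<lambda>x. - Y w x) = 0" if "w \<in> W" for w
      using meanY[OF that] by simp
  qed
  have "measure_pmf.prob (fora_pmf V N \<alpha> \<omega> st) {est. \<bar>ppr N \<alpha> s t - est t\<bar> \<ge> lam}
      = measure_pmf.prob P (g -` {est. \<bar>ppr N \<alpha> s t - est t\<bar> \<ge> lam})"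
    by (simp add: fp)
  also have "\<dots> \<le> measure_pmf.prob P (E1 \<union> E2)"
    by (rule measure_pmf.finite_measure_mono[OF sub]) simp
  also have "\<dots> \<le> measure_pmf.prob P E1 + measure_pmf.prob P E2"
    by (rule measure_subadditive) simp_all
  also have "\<dots> \<le> 2 * exp (- (lam^2) / (2 * (b * pp + b * lam / 3)))"
    using B1 B2 by simp
  also have "- (lam^2) / (2 * (b * pp + b * lam / 3)) = - (lam^2 * \<omega>) / (r_sum V st * (2 * ppr N \<alpha> s t + 2 * lam / 3))"
    unfolding b_def using final_arith[OF om Rs0 pp0 lam] by (simp add: Rs_def pp_def)
  finally show ?thesis .
qed

lemma arith_eps:
  fixes e w R pp :: real
  assumes "e > 0" "pp > 0" "R > 0"
  shows "- ((e * pp)^2 * w) / (R * (2 * pp + 2 * (e * pp) / 3)) = - (e^2 * w * pp) / (R * (2 + 2 * e / 3))"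
proof -
  have "2 * pp + 2 * (e * pp) / 3 = pp * (2 + 2 * e / 3)" by (simp add: algebra_simps)
  moreover have "(e * pp)^2 * w = pp * (e^2 * w * pp)" by (simp add: power2_eq_square algebra_simps)
  moreover have h3: "pp * Z / (R * (pp * Y)) = Z / (R * Y)" for Z Y :: real
    using assms by (simp add: field_simps)
  ultimately have "(e * pp)^2 * w / (R * (2 * pp + 2 * (e * pp) / 3)) = e^2 * w * pp / (R * (2 + 2 * e / 3))"
    by metis
  then show ?thesis by (metis minus_divide_left)
qed

theorem lemma3p2:
  fixes V :: "'a set" and N :: "'a \<Rightarrow> 'a set"
    and \<alpha> rmax \<omega> \<epsilon> lam :: real and s t :: 'a and st :: "'a fp_state"
  assumes "digraph_ok V N"
    and "0 < \<alpha>" and "\<alpha> < 1"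
    and "s \<in> V" and "rmax > 0" and "\<omega> > 0"
    and "forward_push_output V N \<alpha> rmax s st"
    and "t \<in> V" and "\<epsilon> > 0" and "lam > 0"
  shows "(measure_pmf.prob (fora_pmf V N \<alpha> \<omega> st)
           {est. \<bar>ppr N \<alpha> s t - est t\<bar> \<ge> \<epsilon> * ppr N \<alpha> s t}
         \<le> 2 * exp (- (\<epsilon>^2 * \<omega> * ppr N \<alpha> s t) / (r_sum V st * (2 + 2 * \<epsilon> / 3))))
       \<and> (measure_pmf.prob (fora_pmf V N \<alpha> \<omega> st)
           {est. \<bar>ppr N \<alpha> s t - est t\<bar> \<ge> lam}
         \<le> 2 * exp (- (lam^2 * \<omega>) / (r_sum V st * (2 * ppr N \<alpha> s t + 2 * lam / 3))))"
proof -
  have fin: "finite V" using assms(1) by (simp add: digraph_ok_def)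
  have I: "fp_inv V N \<alpha> s st"
  proof -
    have "fp_steps V N \<alpha> rmax (fp_init s) st" using assms(7) by (simp add: forward_push_output_def)
    from fp_inv_steps[OF this assms(1-3) fp_inv_init[OF fin assms(4)]] show ?thesis .
  qed
  have R0: "0 \<le> r_sum V st" using I by (auto simp: r_sum_def fp_inv_def intro: sum_nonneg)
  have le1: "measure_pmf.prob (fora_pmf V N \<alpha> \<omega> st) E \<le> 2 * exp 0" for E
  proof -
    have "measure_pmf.prob (fora_pmf V N \<alpha> \<omega> st) E \<le> 1" by (rule measure_pmf.prob_le_1)
    moreover have "2 * exp (0::real) = 2" by simp
    ultimately show ?thesis by linarith
  qed
  show ?thesis
  proof (cases "r_sum V st = 0")
    case True
    then show ?thesis using le1 by simp
  next
    case False
    then have R: "r_sum V st > 0" using R0 by simp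
    have second: "measure_pmf.prob (fora_pmf V N \<alpha> \<omega> st) {est. \<bar>ppr N \<alpha> s t - est t\<bar> \<ge> l}
         \<le> 2 * exp (- (l^2 * \<omega>) / (r_sum V st * (2 * ppr N \<alpha> s t + 2 * l / 3)))" if "l > 0" for l
      by (rule fora_tail[OF assms(1-3) assms(6) I R that])
    have first: "measure_pmf.prob (fora_pmf V N \<alpha> \<omega> st)
           {est. \<bar>ppr N \<alpha> s t - est t\<bar> \<ge> \<epsilon> * ppr N \<alpha> s t}
         \<le> 2 * exp (- (\<epsilon>^2 * \<omega> * ppr N \<alpha> s t) / (r_sum V st * (2 + 2 * \<epsilon> / 3)))"
    proof (cases "ppr N \<alpha> s t = 0")
      case True
      then show ?thesis using le1 by simp
    next
      case False
      then have pp: "ppr N \<alpha> s t > 0" by (simp add: ppr_def order.order_iff_strict)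
      show ?thesis
        using second[of "\<epsilon> * ppr N \<alpha> s t"] assms(9) pp arith_eps[OF assms(9) pp R, of \<omega>]
        by simp
    qed
    show ?thesis using first second[OF assms(10)] by simp
  qed
qed

end
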